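(* Let $Q$ be a flat $\mathrm{SYNCSIMPLE}$-process that is must-convergent. Then the process $!0\mid ?0\mid Q$ is also must-convergent.
   Context: $\mathrm{SYNCSIMPLE}$: subprocesses are $\mathcal{U} ::= \checkmark \mid 0 \mid\, !\mathcal{U} \mid\, ?\mathcal{U}$; a process is a finite parallel composition $\mathcal{U}_1\mid\cdots\mid\mathcal{U}_n$, where $\mid$ is associative and commutative and $0$ is a unit. The only reduction step is $!\mathcal{U}_1\mid ?\mathcal{U}_2\mid \mathcal{P}\to \mathcal{U}_1\mid\mathcal{U}_2\mid\mathcal{P}$. A process is successful if it has the form $\checkmark\mid\mathcal{P}$; may-convergent if it reduces in zero or more steps to a successful process; must-convergent if every process reachable from it in zero or more steps is may-convergent. A process is flat if it has the form $A_1\mid\cdots\mid A_n$ where each $A_i$ is one of $!0$, $?0$, $!\checkmark$, $?\checkmark$. *)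

theory Defs
  imports Main "HOL-Library.Multiset"
begin

text \<open>Subprocesses of SYNCSIMPLE: U ::= check | 0 | !U | ?U.\<close>
datatype sub = Tick | Zero | Snd sub | Rcv sub

text \<open>A process U1 | ... | Un is a finite multiset of subprocesses
(parallel composition is associative and commutative; the unit 0 is
represented by the element Zero, which never takes part in a reduction
nor in success, so it is harmless to keep it as an element).\<close>
type_synonym proc = "sub multiset"

inductive step :: "proc \<Rightarrow> proc \<Rightarrow> bool" where
  "step ({#Snd U1, Rcv U2#} + P) ({#U1, U2#} + P)"

definition successful :: "proc \<Rightarrow> bool" where
  "successful P \<longleftrightarrow> (\<exists>P'. P = {#Tick#} + P')"

definition may_conv :: "proc \<Rightarrow> bool" where
  "may_conv P \<longleftrightarrow> (\<exists>P'. step\<^sup>*\<^sup>* P P' \<and> successful P')"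

definition must_conv :: "proc \<Rightarrow> bool" where
  "must_conv P \<longleftrightarrow> (\<forall>P'. step\<^sup>*\<^sup>* P P' \<longrightarrow> may_conv P')"

definition flat :: "proc \<Rightarrow> bool" where
  "flat P \<longleftrightarrow> (\<forall>A \<in># P. A \<in> {Snd Zero, Rcv Zero, Snd Tick, Rcv Tick})"

end

theory Submission
  imports Defs
begin

lemma two_in: assumes "x \<in># P" "y \<in># P - {#x#}" shows "\<exists>R. P = {#x, y#} + R"
proof -
  define P1 where "P1 = P - {#x#}"
  have 1: "P = add_mset x P1" unfolding P1_def using assms(1) by (rule insert_DiffM[symmetric])
  have 2: "P1 = add_mset y (P1 - {#y#})" using assms(2) unfolding P1_def by (rule insert_DiffM[symmetric])
  show ?thesis by (rule exI[of _ "P1 - {#y#}"]) (subst 1, subst 2, simp)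
qed

definition gflat :: "proc \<Rightarrow> bool" where
  "gflat P \<longleftrightarrow> (\<forall>A \<in># P. A \<in> {Snd Zero, Rcv Zero, Snd Tick, Rcv Tick, Zero, Tick})"

lemma step_E: "step P P' \<Longrightarrow> \<exists>U1 U2 R. P = {#Snd U1, Rcv U2#} + R \<and> P' = {#U1, U2#} + R"
  by (erule step.cases) blast

definition Inv :: "proc \<Rightarrow> bool" where
  "Inv P \<longleftrightarrow> gflat P \<and> (Tick \<in># P \<or>
     (count P (Snd Tick) > 0 \<and> count P (Rcv Tick) > 0) \<or>
     (count P (Snd Tick) > 0 \<and> count P (Rcv Zero) > count P (Snd Zero)) \<or>
     (count P (Rcv Tick) > 0 \<and> count P (Snd Zero) > count P (Rcv Zero)))"

lemma Inv_step: assumes "step P P'" "Inv P" shows "Inv P'"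
proof -
  obtain U1 U2 R where P: "P = {#Snd U1, Rcv U2#} + R" and P': "P' = {#U1, U2#} + R"
    using step_E[OF assms(1)] by blast
  have g: "gflat P" using assms(2) Inv_def by blast
  have U1: "U1 = Zero \<or> U1 = Tick" using g P unfolding gflat_def by auto
  have U2: "U2 = Zero \<or> U2 = Tick" using g P unfolding gflat_def by auto
  have g': "gflat P'" using g P P' U1 U2 unfolding gflat_def by auto
  show ?thesis
  proof (cases "U1 = Tick \<or> U2 = Tick")
    case True
    then show ?thesis using g' P' Inv_def by auto
  next
    case False
    then have "U1 = Zero" "U2 = Zero" using U1 U2 by auto
    then show ?thesis using assms(2) g' P P' unfolding Inv_def by auto
  qed
qed

lemma Inv_steps: "step\<^sup>*\<^sup>* P P' \<Longrightarrow> Inv P \<Longrightarrow> Inv P'"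
  by (induction rule: rtranclp_induct) (auto intro: Inv_step)

lemma Inv_may: assumes "Inv P" shows "may_conv P"
proof -
  have succ: "may_conv P" if "successful P" for P
    using that unfolding may_conv_def by blast
  have one: "may_conv P" if "step P P'" "successful P'" for P P'
    using that unfolding may_conv_def by blast
  consider "Tick \<in># P" | "count P (Snd Tick) > 0 \<and> count P (Rcv Tick) > 0"
    | "count P (Snd Tick) > 0 \<and> count P (Rcv Zero) > 0"
    | "count P (Rcv Tick) > 0 \<and> count P (Snd Zero) > 0"
    using assms unfolding Inv_def by linarith
  then show ?thesis
  proof cases
    case 1
    then have "P = {#Tick#} + (P - {#Tick#})" by simp
    then have "successful P" unfolding successful_def by blast
    then show ?thesis by (rule succ)
  next
    case 2
    then have "Snd Tick \<in># P" "Rcv Tick \<in># P - {#Snd Tick#}" by (auto simp: in_diff_count)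
    from two_in[OF this] obtain R where R: "P = {#Snd Tick, Rcv Tick#} + R"
      by blast
    have "step P ({#Tick, Tick#} + R)" unfolding R by (rule step.intros)
    moreover have "successful ({#Tick, Tick#} + R)" unfolding successful_def
      by (rule exI[of _ "{#Tick#} + R"]) simp
    ultimately show ?thesis by (rule one)
  next
    case 3
    then have "Snd Tick \<in># P" "Rcv Zero \<in># P - {#Snd Tick#}" by (auto simp: in_diff_count)
    from two_in[OF this] obtain R where R: "P = {#Snd Tick, Rcv Zero#} + R"
      by blast
    have "step P ({#Tick, Zero#} + R)" unfolding R by (rule step.intros)
    moreover have "successful ({#Tick, Zero#} + R)" unfolding successful_def
      by (rule exI[of _ "{#Zero#} + R"]) simp
    ultimately show ?thesis by (rule one)
  next
    case 4
    then have "Snd Zero \<in># P" "Rcv Tick \<in># P - {#Snd Zero#}" by (auto simp: in_diff_count)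
    from two_in[OF this] obtain R where R: "P = {#Snd Zero, Rcv Tick#} + R"
      by blast
    have "step P ({#Zero, Tick#} + R)" unfolding R by (rule step.intros)
    moreover have "successful ({#Zero, Tick#} + R)" unfolding successful_def
      by (rule exI[of _ "{#Zero#} + R"]) (simp add: add_mset_commute)
    ultimately show ?thesis by (rule one)
  qed
qed

definition Bad :: "proc \<Rightarrow> bool" where
  "Bad P \<longleftrightarrow> gflat P \<and> Tick \<notin># P \<and>
     \<not> (count P (Snd Tick) > 0 \<and> count P (Rcv Zero) + count P (Rcv Tick) > 0) \<and>
     \<not> (count P (Rcv Tick) > 0 \<and> count P (Snd Zero) + count P (Snd Tick) > 0)"

lemma Bad_step: assumes "step P P'" "Bad P" shows "Bad P'"
proof -
  obtain U1 U2 R where P: "P = {#Snd U1, Rcv U2#} + R" and P': "P' = {#U1, U2#} + R"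
    using step_E[OF assms(1)] by blast
  have g: "gflat P" using assms(2) Bad_def by blast
  have U1: "U1 = Zero \<or> U1 = Tick" using g P unfolding gflat_def by auto
  have U2: "U2 = Zero \<or> U2 = Tick" using g P unfolding gflat_def by auto
  have g': "gflat P'" using g P P' U1 U2 unfolding gflat_def by auto
  have "U1 = Zero" using assms(2) P U1 U2 unfolding Bad_def by auto
  moreover have "U2 = Zero" using assms(2) P U1 U2 unfolding Bad_def by auto
  ultimately show ?thesis using assms(2) g' P P' unfolding Bad_def by auto
qed

lemma Bad_steps: "step\<^sup>*\<^sup>* P P' \<Longrightarrow> Bad P \<Longrightarrow> Bad P'"
  by (induction rule: rtranclp_induct) (auto intro: Bad_step)

lemma Bad_not_may: "Bad P \<Longrightarrow> \<not> may_conv P"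
  unfolding may_conv_def using Bad_steps unfolding Bad_def successful_def by fastforce

lemma zero_steps:
  "count P (Snd Zero) \<ge> k \<Longrightarrow> count P (Rcv Zero) \<ge> k \<Longrightarrow>
   \<exists>P'. step\<^sup>*\<^sup>* P P' \<and> P' = P - replicate_mset k (Snd Zero) - replicate_mset k (Rcv Zero)
      + replicate_mset (2*k) Zero"
proof (induction k arbitrary: P)
  case 0
  then show ?case by simp
next
  case (Suc k)
  have "Snd Zero \<in># P" "Rcv Zero \<in># P - {#Snd Zero#}" using Suc.prems
    by (intro count_inI; simp)+
  from two_in[OF this] obtain R where R: "P = {#Snd Zero, Rcv Zero#} + R"
      by blast
  have st: "step P ({#Zero, Zero#} + R)" unfolding R by (rule step.intros)
  let ?Q = "{#Zero, Zero#} + R"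
  have "count ?Q (Snd Zero) \<ge> k" "count ?Q (Rcv Zero) \<ge> k" using Suc.prems R by auto
  from Suc.IH[OF this] obtain P' where
    sQ: "step\<^sup>*\<^sup>* ?Q P'" and P': "P' = ?Q - replicate_mset k (Snd Zero) - replicate_mset k (Rcv Zero)
      + replicate_mset (2*k) Zero" by blast
  have eq: "P' = P - replicate_mset (Suc k) (Snd Zero) - replicate_mset (Suc k) (Rcv Zero)
      + replicate_mset (2*Suc k) Zero"
    unfolding P' R by (rule multiset_eqI) auto
  have "step\<^sup>*\<^sup>* P P'" using st sQ by (rule converse_rtranclp_into_rtranclp)
  then show ?case using eq by blast
qed

theorem lemma5p15:
  assumes "flat Q" and "must_conv Q"
  shows "must_conv ({#Snd Zero, Rcv Zero#} + Q)"
proof -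
  let ?a = "count Q (Snd Zero)" and ?b = "count Q (Rcv Zero)"
    and ?c = "count Q (Snd Tick)" and ?d = "count Q (Rcv Tick)"
  have gQ: "gflat Q" "Tick \<notin># Q" using assms(1) unfolding flat_def gflat_def by auto
  have cond: "(?c > 0 \<and> ?d > 0) \<or> (?c > 0 \<and> ?b > ?a) \<or> (?d > 0 \<and> ?a > ?b)"
  proof (rule ccontr)
    assume nc: "\<not> ?thesis"
    define k where "k = min ?a ?b"
    obtain P' where st: "step\<^sup>*\<^sup>* Q P'" and P': "P' = Q - replicate_mset k (Snd Zero)
       - replicate_mset k (Rcv Zero) + replicate_mset (2*k) Zero"
      using zero_steps[of k Q] unfolding k_def by auto
    have "Bad P'" using gQ nc unfolding Bad_def P' gflat_def k_def
      by (auto simp: in_diff_count count_greater_zero_iff[symmetric] simp del: count_greater_zero_iff split: if_splits)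
    then show False using assms(2) st Bad_not_may unfolding must_conv_def by blast
  qed
  have "Inv ({#Snd Zero, Rcv Zero#} + Q)"
    using gQ cond unfolding Inv_def gflat_def by auto
  then show ?thesis unfolding must_conv_def using Inv_steps Inv_may by blast
qed

end
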